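(* Let $n\ge 5$ and let $G$ be a connected simple graph with $n$ vertices and $n+1$ edges. Then \[ \operatorname{avm}(G)\ge \frac{4n-11}{2n-5}. \] Moreover, equality holds if and only if $G\cong \theta_n^1(3,3)$.
   Context: For a finite simple graph $G$, a matching is a set of pairwise vertex-disjoint edges; it is maximal if it is not properly contained in another matching. Let $\mathcal{M}(G)$ be the set of maximal matchings of $G$. The average size of maximal matchings is $\operatorname{avm}(G)=\frac{1}{|\mathcal{M}(G)|}\sum_{M\in\mathcal{M}(G)}|M|$. For $n\ge 4$, $\theta_n^1(3,3)$ denotes the graph obtained from $K_4$ minus an edge (vertices $u,v,x,y$ with edges $uv,ux,uy,vx,vy$; i.e. two triangles sharing the edge $uv$) by attaching $n-4$ pendant edges (new leaves) to the vertex $u$, one of the two vertices of degree $3$. *)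

theory Defs
  imports Complex_Main
begin

definition simple_graph :: "'a set \<Rightarrow> 'a set set \<Rightarrow> bool" where
  "simple_graph V E \<longleftrightarrow> finite V \<and> (\<forall>e\<in>E. e \<subseteq> V \<and> card e = 2)"

definition adj_rel :: "'a set set \<Rightarrow> ('a \<times> 'a) set" where
  "adj_rel E = {(x, y). {x, y} \<in> E}"

definition connected_graph :: "'a set \<Rightarrow> 'a set set \<Rightarrow> bool" where
  "connected_graph V E \<longleftrightarrow> (\<forall>u\<in>V. \<forall>v\<in>V. (u, v) \<in> (adj_rel E)\<^sup>*)"

definition matching :: "'a set set \<Rightarrow> 'a set set \<Rightarrow> bool" where
  "matching E M \<longleftrightarrow> M \<subseteq> E \<and> (\<forall>e1\<in>M. \<forall>e2\<in>M. e1 \<noteq> e2 \<longrightarrow> e1 \<inter> e2 = {})"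

definition maximal_matching :: "'a set set \<Rightarrow> 'a set set \<Rightarrow> bool" where
  "maximal_matching E M \<longleftrightarrow> matching E M \<and> (\<forall>M'. matching E M' \<and> M \<subseteq> M' \<longrightarrow> M' = M)"

definition maximal_matchings :: "'a set set \<Rightarrow> 'a set set set" where
  "maximal_matchings E = {M. maximal_matching E M}"

definition avm :: "'a set set \<Rightarrow> real" where
  "avm E = (\<Sum>M\<in>maximal_matchings E. real (card M)) / real (card (maximal_matchings E))"

definition graph_iso :: "'a set \<Rightarrow> 'a set set \<Rightarrow> 'b set \<Rightarrow> 'b set set \<Rightarrow> bool" where
  "graph_iso V E W F \<longleftrightarrow> (\<exists>f. bij_betw f V W \<and>
     (\<forall>x\<in>V. \<forall>y\<in>V. {x, y} \<in> E \<longleftrightarrow> {f x, f y} \<in> F))"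

text \<open>theta_n^1(3,3): vertices 0..n-1, u=0, v=1, x=2, y=3, leaves 4..n-1 attached to u.\<close>
definition theta_V :: "nat \<Rightarrow> nat set" where
  "theta_V n = {0..<n}"

definition theta_E :: "nat \<Rightarrow> nat set set" where
  "theta_E n = {{0,1},{0,2},{0,3},{1,2},{1,3}} \<union> {{0, i} | i. 4 \<le> i \<and> i < n}"

end

theory Submission
  imports Defs
begin



lemma sg_finE: "simple_graph V E \<Longrightarrow> finite E"
proof -
  assume a: "simple_graph V E"
  hence "E \<subseteq> Pow V" "finite V" unfolding simple_graph_def by auto
  thus "finite E" by (meson finite_Pow_iff finite_subset)
qed

lemma sg_edge: "simple_graph V E \<Longrightarrow> e \<in> E \<Longrightarrow> \<exists>a b. a \<noteq> b \<and> e = {a,b} \<and> a \<in> V \<and> b \<in> V"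
  unfolding simple_graph_def by (metis card_2_iff insert_subset)

lemma sg_edge2: "simple_graph V E \<Longrightarrow> {a,b} \<in> E \<Longrightarrow> a \<noteq> b \<and> a \<in> V \<and> b \<in> V"
proof -
  assume "simple_graph V E" "{a,b} \<in> E"
  hence "{a,b} \<subseteq> V" "card {a,b} = 2" unfolding simple_graph_def by auto
  thus ?thesis by (cases "a = b") auto
qed

lemma exists_maxm: assumes "finite E" shows "\<exists>M. maximal_matching E M"
proof -
  let ?S = "{M. matching E M}"
  have "?S \<subseteq> Pow E" unfolding matching_def by auto
  hence fS: "finite ?S" using assms by (meson finite_Pow_iff finite_subset)
  have "{} \<in> ?S" unfolding matching_def by auto
  hence ne: "card ` ?S \<noteq> {}" by blast
  have "Max (card ` ?S) \<in> card ` ?S" using fS ne by (intro Max_in) auto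
  then obtain M where M: "M \<in> ?S" "card M = Max (card ` ?S)" by auto
  have "maximal_matching E M" unfolding maximal_matching_def
  proof (intro conjI allI impI)
    show "matching E M" using M by auto
    fix M' assume h: "matching E M' \<and> M \<subseteq> M'"
    hence "card M' \<le> card M" using M fS by (simp add: Max_ge)
    moreover have "finite M'" using h assms unfolding matching_def by (meson finite_subset)
    ultimately show "M' = M" using h by (metis card_seteq)
  qed
  thus ?thesis by blast
qed

lemma finMM: "finite E \<Longrightarrow> finite (maximal_matchings E)"
proof -
  assume "finite E"
  moreover have "maximal_matchings E \<subseteq> Pow E"
    unfolding maximal_matchings_def maximal_matching_def matching_def by auto
  ultimately show ?thesis by (meson finite_Pow_iff finite_subset)
qed




definition dom_edge :: "'a set set \<Rightarrow> 'a \<Rightarrow> 'a \<Rightarrow> bool" where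
  "dom_edge E u v \<longleftrightarrow> u \<noteq> v \<and> {u,v} \<in> E \<and> (\<forall>e\<in>E. u \<in> e \<or> v \<in> e)"

lemma card_ge2:
  assumes sg: "simple_graph V E" and ne: "E \<noteq> {}" and nd: "\<not> (\<exists>u v. dom_edge E u v)"
    and mm: "maximal_matching E M"
  shows "card M \<ge> 2"
proof (rule ccontr)
  assume "\<not> card M \<ge> 2"
  hence c: "card M = 0 \<or> card M = 1" by auto
  have fM: "finite M" using mm sg_finE[OF sg] unfolding maximal_matching_def matching_def
    by (meson finite_subset)
  show False
  proof (cases "card M = 0")
    case True
    hence "M = {}" using fM by auto
    obtain e where "e \<in> E" using ne by auto
    hence "matching E {e}" unfolding matching_def by auto
    thus False using mm \<open>M = {}\<close> unfolding maximal_matching_def by blast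
  next
    case False
    hence "card M = 1" using c by simp
    then obtain e where Me: "M = {e}" by (rule card_1_singletonE)
    hence eE: "e \<in> E" using mm unfolding maximal_matching_def matching_def by auto
    obtain a b where ab: "a \<noteq> b" "e = {a,b}" using sg_edge[OF sg eE] by blast
    obtain f where f: "f \<in> E" "a \<notin> f" "b \<notin> f" using nd ab eE unfolding dom_edge_def by blast
    have "matching E {e, f}" using f eE ab unfolding matching_def by auto
    moreover have "f \<noteq> e" using f ab by auto
    ultimately show False using mm Me unfolding maximal_matching_def by blast
  qed
qed

lemma avm_ge2:
  assumes sg: "simple_graph V E" and ne: "E \<noteq> {}" and nd: "\<not> (\<exists>u v. dom_edge E u v)"
  shows "avm E \<ge> 2"
proof -
  let ?MM = "maximal_matchings E"
  have f: "finite ?MM" using finMM sg_finE[OF sg] by auto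
  have "?MM \<noteq> {}" using exists_maxm sg_finE[OF sg] unfolding maximal_matchings_def by auto
  hence pos: "real (card ?MM) > 0" using f by auto
  have "(\<Sum>M\<in>?MM. real (card M)) \<ge> (\<Sum>M\<in>?MM. 2)"
    by (intro sum_mono) (use card_ge2[OF sg ne nd] in \<open>auto simp: maximal_matchings_def\<close>)
  hence "(\<Sum>M\<in>?MM. real (card M)) \<ge> 2 * real (card ?MM)" by simp
  thus ?thesis unfolding avm_def using pos by (simp add: pos_le_divide_eq)
qed




lemma theta_0: "1 \<le> i \<Longrightarrow> i < n \<Longrightarrow> {0, i} \<in> theta_E n"
proof -
  assume i: "1 \<le> i" "i < n"
  show ?thesis
  proof (cases "4 \<le> i")
    case True
    hence "{0, i} \<in> {{0, i} | i. 4 \<le> i \<and> i < n}" using i by blast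
    thus ?thesis unfolding theta_E_def by blast
  next
    case False
    hence "i = 1 \<or> i = 2 \<or> i = 3" using i by auto
    thus ?thesis unfolding theta_E_def by blast
  qed
qed

lemma theta_01: "e \<in> theta_E n \<Longrightarrow> 0 \<in> e \<or> 1 \<in> e"
  unfolding theta_E_def by auto

lemma iso_facts:
  assumes sg: "simple_graph V E" and iso: "graph_iso V E (theta_V n) (theta_E n)" and n: "n \<ge> 2"
  shows "\<exists>p q. p \<in> V \<and> q \<in> V \<and> p \<noteq> q \<and> {p,q} \<in> E \<and> (\<forall>e\<in>E. p \<in> e \<or> q \<in> e)
     \<and> (\<forall>w\<in>V. w \<noteq> p \<longrightarrow> {p,w} \<in> E)"
proof -
  obtain f where bij: "bij_betw f V {0..<n}" and ed: "\<forall>x\<in>V. \<forall>y\<in>V. {x, y} \<in> E \<longleftrightarrow> {f x, f y} \<in> theta_E n"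
    using iso unfolding graph_iso_def theta_V_def by blast
  define p where "p = inv_into V f 0"
  define q where "q = inv_into V f 1"
  have pV: "p \<in> V" "f p = 0" using bij n unfolding p_def bij_betw_def
    by (auto intro: inv_into_into f_inv_into_f)
  have qV: "q \<in> V" "f q = 1" using bij n unfolding q_def bij_betw_def
    by (auto intro: inv_into_into f_inv_into_f)
  have pq: "p \<noteq> q" using pV qV by auto
  have "{p,q} \<in> E" using ed pV qV theta_0[of 1 n] n by auto
  moreover have "\<forall>e\<in>E. p \<in> e \<or> q \<in> e"
  proof
    fix e assume "e \<in> E"
    then obtain a b where ab: "e = {a,b}" "a \<in> V" "b \<in> V" using sg_edge[OF sg] by blast
    hence "{f a, f b} \<in> theta_E n" using ed \<open>e \<in> E\<close> by auto
    hence "f a = f p \<or> f a = f q \<or> f b = f p \<or> f b = f q" using theta_01 pV qV by fastforce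
    hence "a = p \<or> a = q \<or> b = p \<or> b = q" using bij pV qV ab unfolding bij_betw_def inj_on_def by metis
    thus "p \<in> e \<or> q \<in> e" using ab by auto
  qed
  moreover have "\<forall>w\<in>V. w \<noteq> p \<longrightarrow> {p,w} \<in> E"
  proof (intro ballI impI)
    fix w assume w: "w \<in> V" "w \<noteq> p"
    hence "f w \<noteq> 0" using bij pV unfolding bij_betw_def inj_on_def by metis
    moreover have "f w < n" using bij w unfolding bij_betw_def by auto
    ultimately have "{f p, f w} \<in> theta_E n" using pV theta_0[of "f w" n] by auto
    thus "{p,w} \<in> E" using ed w pV by auto
  qed
  ultimately show ?thesis using pV qV pq by blast
qed





lemma rtrancl_last: "(a, b) \<in> R\<^sup>* \<Longrightarrow> a \<noteq> b \<Longrightarrow> \<exists>z. (z, b) \<in> R"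
  by (induction rule: rtrancl_induct) auto

locale bic =
  fixes V :: "'a set" and E :: "'a set set" and n :: nat and u v :: 'a
  assumes sg: "simple_graph V E" and cn: "connected_graph V E"
    and cV: "card V = n" and n5: "n \<ge> 5" and cE: "card E = n + 1"
    and de: "dom_edge E u v"
begin

definition "A = {w. {u,w} \<in> E} - {v}"
definition "B = {w. {v,w} \<in> E} - {u}"

lemma uv: "u \<noteq> v" "{u,v} \<in> E" "\<And>e. e \<in> E \<Longrightarrow> u \<in> e \<or> v \<in> e"
  using de unfolding dom_edge_def by auto

lemma finV: "finite V" using sg unfolding simple_graph_def by auto
lemma finE: "finite E" using sg_finE[OF sg] .

lemma uvV: "u \<in> V" "v \<in> V" using sg_edge2[OF sg uv(2)] by auto

lemma A_sub: "A \<subseteq> V - {u,v}"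
  unfolding A_def using sg_edge2[OF sg] by auto
lemma B_sub: "B \<subseteq> V - {u,v}"
  unfolding B_def using sg_edge2[OF sg] by (auto simp: insert_commute)

lemma finA: "finite A" using A_sub finV finite_subset by blast
lemma finB: "finite B" using B_sub finV finite_subset by blast

lemma E_eq: "E = insert {u,v} ((\<lambda>w. {u,w}) ` A \<union> (\<lambda>w. {v,w}) ` B)"
proof
  show "E \<subseteq> insert {u,v} ((\<lambda>w. {u,w}) ` A \<union> (\<lambda>w. {v,w}) ` B)"
  proof
    fix e assume e: "e \<in> E"
    then obtain a b where ab: "a \<noteq> b" "e = {a,b}" using sg_edge[OF sg] by blast
    have "u \<in> e \<or> v \<in> e" using uv e by auto
    thus "e \<in> insert {u,v} ((\<lambda>w. {u,w}) ` A \<union> (\<lambda>w. {v,w}) ` B)"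
      using e ab unfolding A_def B_def by (auto simp: insert_commute)
  qed
  show "insert {u,v} ((\<lambda>w. {u,w}) ` A \<union> (\<lambda>w. {v,w}) ` B) \<subseteq> E"
    using uv unfolding A_def B_def by auto
qed

lemma card_AB: "card A + card B = n"
proof -
  have d1: "{u,v} \<notin> (\<lambda>w. {u,w}) ` A \<union> (\<lambda>w. {v,w}) ` B"
    using A_sub B_sub by (auto simp: doubleton_eq_iff)
  have d2: "(\<lambda>w. {u,w}) ` A \<inter> (\<lambda>w. {v,w}) ` B = {}"
    using A_sub B_sub uv(1) by (auto simp: doubleton_eq_iff)
  have i1: "inj_on (\<lambda>w. {u,w}) A" unfolding inj_on_def using A_sub by (auto simp: doubleton_eq_iff)
  have i2: "inj_on (\<lambda>w. {v,w}) B" unfolding inj_on_def using B_sub by (auto simp: doubleton_eq_iff)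
  have "card E = 1 + card ((\<lambda>w. {u,w}) ` A \<union> (\<lambda>w. {v,w}) ` B)"
    using E_eq d1 finA finB by (metis card_insert_disjoint finite_Un finite_imageI plus_1_eq_Suc)
  also have "\<dots> = 1 + card A + card B"
    using card_Un_disjoint[OF _ _ d2] finA finB card_image[OF i1] card_image[OF i2] by simp
  finally show ?thesis using cE by simp
qed

lemma AB_un: "A \<union> B = V - {u,v}"
proof
  show "A \<union> B \<subseteq> V - {u,v}" using A_sub B_sub by auto
  show "V - {u,v} \<subseteq> A \<union> B"
  proof
    fix w assume w: "w \<in> V - {u,v}"
    hence uw: "(u, w) \<in> (adj_rel E)\<^sup>*" using cn uvV unfolding connected_graph_def by auto
    have "u \<noteq> w" using w by auto
    then obtain z where "(z, w) \<in> adj_rel E" using rtrancl_last[OF uw] by blast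
    hence zw: "{z,w} \<in> E" unfolding adj_rel_def by auto
    hence "z = u \<or> z = v" using uv(3)[OF zw] w by auto
    thus "w \<in> A \<union> B" using zw w unfolding A_def B_def by auto
  qed
qed

lemma card_un: "card (A \<union> B) = n - 2"
  using AB_un uvV uv(1) cV finV by (simp add: card_Diff_subset)

lemma card_int: "card (A \<inter> B) = 2"
proof -
  have "card A + card B = card (A \<union> B) + card (A \<inter> B)" by (rule card_Un_Int[OF finA finB])
  thus ?thesis using card_un card_AB n5 by arith
qed

lemma cA2: "card A \<ge> 2" using card_int finA card_mono[of A "A \<inter> B"] by simp
lemma cB2: "card B \<ge> 2" using card_int finB card_mono[of B "A \<inter> B"] by simp

definition "P = {(w, w'). w \<in> A \<and> w' \<in> B \<and> w \<noteq> w'}"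
definition "pm = (\<lambda>(w, w'). {{u,w},{v,w'}})"

lemma card_P: "card P = card A * card B - 2"
proof -
  have "P = A \<times> B - (\<lambda>w. (w,w)) ` (A \<inter> B)" unfolding P_def by auto
  moreover have "card ((\<lambda>w. (w,w)) ` (A \<inter> B)) = 2"
    using card_int by (simp add: card_image inj_on_def)
  ultimately show ?thesis using finA finB
    by (simp add: card_Diff_subset card_cartesian_product finite_imageI image_subset_iff)
qed

lemma finP: "finite P"
proof -
  have "P \<subseteq> A \<times> B" unfolding P_def by auto
  thus ?thesis using finA finB finite_subset by blast
qed

end



context bic begin

lemma edge_other: "e \<in> E \<Longrightarrow> x \<in> e \<Longrightarrow> \<exists>y. y \<noteq> x \<and> e = {x,y}"
  using sg_edge[OF sg] by (metis insert_commute insert_iff singletonD)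

lemma memA: "w \<in> A \<longleftrightarrow> {u,w} \<in> E \<and> w \<noteq> v" unfolding A_def by auto
lemma memB: "w \<in> B \<longleftrightarrow> {v,w} \<in> E \<and> w \<noteq> u" unfolding B_def by auto

lemma A_nuv: "w \<in> A \<Longrightarrow> w \<noteq> u \<and> w \<noteq> v \<and> w \<in> V" using A_sub by auto
lemma B_nuv: "w \<in> B \<Longrightarrow> w \<noteq> u \<and> w \<noteq> v \<and> w \<in> V" using B_sub by auto

lemma claim_u:
  assumes mm: "maximal_matching E M" and nuv: "{u,v} \<notin> M"
  shows "\<exists>e\<in>M. u \<in> e"
proof (rule ccontr)
  assume nu: "\<not> (\<exists>e\<in>M. u \<in> e)"
  have ME: "M \<subseteq> E" and dis: "\<And>e1 e2. e1 \<in> M \<Longrightarrow> e2 \<in> M \<Longrightarrow> e1 \<noteq> e2 \<Longrightarrow> e1 \<inter> e2 = {}"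
    using mm unfolding maximal_matching_def matching_def by auto
  have mx: "\<And>M'. matching E M' \<Longrightarrow> M \<subseteq> M' \<Longrightarrow> M' = M"
    using mm unfolding maximal_matching_def by auto
  show False
  proof (cases "\<exists>f\<in>M. v \<in> f")
    case True
    then obtain f where f: "f \<in> M" "v \<in> f" by blast
    obtain w' where w': "w' \<noteq> v" "f = {v,w'}" using edge_other f ME by blast
    have "w' \<noteq> u" using nu f w' by auto
    hence w'B: "w' \<in> B" using f w' ME memB by auto
    have "A - {w'} \<noteq> {}"
    proof
      assume "A - {w'} = {}"
      hence "A \<subseteq> {w'}" by auto
      hence "card A \<le> 1" using card_mono[of "{w'}" A] by simp
      thus False using cA2 by simp
    qed
    then obtain w where w: "w \<in> A" "w \<noteq> w'" by auto
    let ?e = "{u,w}"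
    have eE: "?e \<in> E" using w memA by auto
    have edis: "\<And>g. g \<in> M \<Longrightarrow> ?e \<inter> g = {}"
    proof -
      fix g assume g: "g \<in> M"
      have "u \<notin> g" using nu g by auto
      hence "v \<in> g" using uv(3) g ME by auto
      hence "g = f" using dis[OF g f(1)] f(2) by auto
      thus "?e \<inter> g = {}" using w' w A_nuv[OF w(1)] uv(1) \<open>w' \<noteq> u\<close> by auto
    qed
    have "matching E (insert ?e M)" unfolding matching_def
    proof (intro conjI ballI impI)
      show "insert ?e M \<subseteq> E" using eE ME by auto
      fix e1 e2 assume "e1 \<in> insert ?e M" "e2 \<in> insert ?e M" "e1 \<noteq> e2"
      thus "e1 \<inter> e2 = {}" using edis dis by (auto simp: Int_commute)
    qed
    moreover have "?e \<notin> M" using nu by auto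
    ultimately show False using mx by blast
  next
    case False
    have "matching E (insert {u,v} M)" unfolding matching_def
    proof (intro conjI ballI impI)
      show "insert {u,v} M \<subseteq> E" using uv(2) ME by auto
      fix e1 e2 assume "e1 \<in> insert {u,v} M" "e2 \<in> insert {u,v} M" "e1 \<noteq> e2"
      thus "e1 \<inter> e2 = {}" using False nu dis[of e1 e2] by auto
    qed
    thus False using mx nuv by blast
  qed
qed

end




context bic begin

interpretation sw: bic V E n v u
  by unfold_locales (use sg cn cV n5 cE de in \<open>auto simp: dom_edge_def insert_commute\<close>)

lemma swA: "sw.A = B" unfolding sw.A_def B_def by simp
lemma swB: "sw.B = A" unfolding sw.B_def A_def by simp

lemma claim_v: "maximal_matching E M \<Longrightarrow> {u,v} \<notin> M \<Longrightarrow> \<exists>f\<in>M. v \<in> f"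
  using sw.claim_u by (simp add: insert_commute)

lemma mm_char:
  assumes mm: "maximal_matching E M"
  shows "M = {{u,v}} \<or> (\<exists>p\<in>P. M = pm p)"
proof -
  have ME: "M \<subseteq> E" and dis: "\<And>e1 e2. e1 \<in> M \<Longrightarrow> e2 \<in> M \<Longrightarrow> e1 \<noteq> e2 \<Longrightarrow> e1 \<inter> e2 = {}"
    using mm unfolding maximal_matching_def matching_def by auto
  show ?thesis
  proof (cases "{u,v} \<in> M")
    case True
    have "\<And>g. g \<in> M \<Longrightarrow> g = {u,v}"
    proof -
      fix g assume g: "g \<in> M"
      show "g = {u,v}"
      proof (rule ccontr)
        assume "g \<noteq> {u,v}"
        hence "g \<inter> {u,v} = {}" using dis[OF g True] by auto
        thus False using uv(3)[of g] g ME by auto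
      qed
    qed
    hence "M = {{u,v}}" using True by blast
    thus ?thesis by simp
  next
    case False
    obtain e where e: "e \<in> M" "u \<in> e" using claim_u[OF mm False] by blast
    obtain f where f: "f \<in> M" "v \<in> f" using claim_v[OF mm False] by blast
    obtain w where w: "w \<noteq> u" "e = {u,w}" using edge_other e ME by blast
    obtain w' where w': "w' \<noteq> v" "f = {v,w'}" using edge_other f ME by blast
    have wv: "w \<noteq> v" using w e False by auto
    have w'u: "w' \<noteq> u" using w' f False by (auto simp: insert_commute)
    have wA: "w \<in> A" using memA w wv e ME by auto
    have w'B: "w' \<in> B" using memB w' w'u f ME by auto
    have ef: "e \<noteq> f" using w wv uv(1) w' by (auto simp: doubleton_eq_iff)
    hence "e \<inter> f = {}" using dis e f by auto
    hence ww': "w \<noteq> w'" using w w' by auto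
    have "M = {e, f}"
    proof
      show "{e,f} \<subseteq> M" using e f by auto
      show "M \<subseteq> {e,f}"
      proof
        fix g assume g: "g \<in> M"
        have "u \<in> g \<or> v \<in> g" using uv(3) g ME by auto
        thus "g \<in> {e,f}" using dis[OF g e(1)] dis[OF g f(1)] e f by auto
      qed
    qed
    hence "M = pm (w, w')" unfolding pm_def using w w' by simp
    moreover have "(w, w') \<in> P" unfolding P_def using wA w'B ww' by simp
    ultimately show ?thesis by blast
  qed
qed

lemma mm_uv: "maximal_matching E {{u,v}}"
  unfolding maximal_matching_def
proof (intro conjI allI impI)
  show "matching E {{u,v}}" unfolding matching_def using uv(2) by auto
  fix M' assume h: "matching E M' \<and> {{u,v}} \<subseteq> M'"
  have "\<And>g. g \<in> M' \<Longrightarrow> g = {u,v}"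
  proof -
    fix g assume g: "g \<in> M'"
    show "g = {u,v}"
    proof (rule ccontr)
      assume "g \<noteq> {u,v}"
      hence "g \<inter> {u,v} = {}" using h g unfolding matching_def by auto
      moreover have "g \<in> E" using h g unfolding matching_def by auto
      ultimately show False using uv(3)[of g] by auto
    qed
  qed
  thus "M' = {{u,v}}" using h by blast
qed

lemma mm_pm:
  assumes p: "p \<in> P" shows "maximal_matching E (pm p)"
proof -
  obtain w w' where p': "p = (w, w')" "w \<in> A" "w' \<in> B" "w \<noteq> w'" using p unfolding P_def by auto
  have wn: "w \<noteq> u" "w \<noteq> v" using A_nuv[OF p'(2)] by auto
  have w'n: "w' \<noteq> u" "w' \<noteq> v" using B_nuv[OF p'(3)] by auto
  have e1: "{u,w} \<in> E" and e2: "{v,w'} \<in> E" using p' memA memB by auto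
  have pmp: "pm p = {{u,w},{v,w'}}" unfolding pm_def p' by simp
  have disj: "{u,w} \<inter> {v,w'} = {}" using wn w'n p'(4) uv(1) by auto
  show ?thesis unfolding maximal_matching_def
  proof (intro conjI allI impI)
    show mt: "matching E (pm p)" unfolding matching_def pmp using e1 e2 disj by (auto simp: Int_commute)
    fix M' assume h: "matching E M' \<and> pm p \<subseteq> M'"
    have "\<And>g. g \<in> M' \<Longrightarrow> g \<in> pm p"
    proof -
      fix g assume g: "g \<in> M'"
      show "g \<in> pm p"
      proof (rule ccontr)
        assume ng: "g \<notin> pm p"
        have "{u,w} \<in> M'" "{v,w'} \<in> M'" using h pmp by auto
        hence "g \<inter> {u,w} = {}" "g \<inter> {v,w'} = {}" using h g ng pmp unfolding matching_def by auto
        moreover have "g \<in> E" using h g unfolding matching_def by auto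
        ultimately show False using uv(3)[of g] by auto
      qed
    qed
    thus "M' = pm p" using h by blast
  qed
qed

lemma MM_eq: "maximal_matchings E = insert {{u,v}} (pm ` P)"
  using mm_char mm_uv mm_pm unfolding maximal_matchings_def by auto

lemma inj_pm: "inj_on pm P"
proof
  fix p q assume p: "p \<in> P" and q: "q \<in> P" and eq: "pm p = pm q"
  obtain w w' where p': "p = (w, w')" "w \<in> A" "w' \<in> B" using p unfolding P_def by auto
  obtain z z' where q': "q = (z, z')" "z \<in> A" "z' \<in> B" using q unfolding P_def by auto
  have "{{u,w},{v,w'}} = {{u,z},{v,z'}}" using eq p' q' unfolding pm_def by simp
  moreover have "w \<noteq> v" "z \<noteq> v" "w' \<noteq> u" "z' \<noteq> u" using p' q' A_nuv B_nuv by auto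
  ultimately have "w = z \<and> w' = z'" using uv(1) by (auto simp: doubleton_eq_iff)
  thus "p = q" using p' q' by simp
qed

lemma uv_notin: "{{u,v}} \<notin> pm ` P"
proof
  assume "{{u,v}} \<in> pm ` P"
  then obtain w w' where "(w, w') \<in> P" "{{u,v}} = {{u,w},{v,w'}}" unfolding pm_def by auto
  hence "{u,w} = {u,v}" "w \<in> A" unfolding P_def by (auto simp: doubleton_eq_iff)
  thus False using A_nuv by (auto simp: doubleton_eq_iff)
qed

lemma card_pm: "p \<in> P \<Longrightarrow> card (pm p) = 2"
proof -
  assume p: "p \<in> P"
  obtain w w' where p': "p = (w, w')" "w \<in> A" "w' \<in> B" using p unfolding P_def by auto
  have "{u,w} \<noteq> {v,w'}" using p' A_nuv B_nuv uv(1) by (auto simp: doubleton_eq_iff)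
  thus ?thesis unfolding pm_def p' by simp
qed

lemma card_MM: "card (maximal_matchings E) = 1 + card P"
  using MM_eq uv_notin card_image[OF inj_pm] finP by simp

lemma sum_MM: "(\<Sum>M\<in>maximal_matchings E. real (card M)) = 1 + 2 * real (card P)"
proof -
  have "(\<Sum>M\<in>maximal_matchings E. real (card M)) = real (card {{u,v}}) + (\<Sum>M\<in>pm ` P. real (card M))"
    unfolding MM_eq using uv_notin finP by simp
  also have "(\<Sum>M\<in>pm ` P. real (card M)) = (\<Sum>p\<in>P. real (card (pm p)))"
    by (rule sum.reindex[OF inj_pm, unfolded comp_def])
  also have "\<dots> = (\<Sum>p\<in>P. 2)" using card_pm by simp
  finally show ?thesis by simp
qed

lemma avm_B: "avm E = (1 + 2 * real (card P)) / (1 + real (card P))"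
  unfolding avm_def sum_MM card_MM by simp

end




lemma theta_char:
  assumes n4: "n \<ge> 4"
  shows "{i,j} \<in> theta_E n \<longleftrightarrow> (i = 0 \<and> 1 \<le> j \<and> j < n) \<or> (j = 0 \<and> 1 \<le> i \<and> i < n)
     \<or> (i = 1 \<and> (j = 2 \<or> j = 3)) \<or> (j = 1 \<and> (i = 2 \<or> i = 3))"
proof
  assume "{i,j} \<in> theta_E n"
  hence "{i,j} \<in> {{0,1},{0,2},{0,3},{1,2},{1,3}} \<or> (\<exists>k. {i,j} = {0,k} \<and> 4 \<le> k \<and> k < n)"
    unfolding theta_E_def Un_iff mem_Collect_eq .
  thus "(i = 0 \<and> 1 \<le> j \<and> j < n) \<or> (j = 0 \<and> 1 \<le> i \<and> i < n)
     \<or> (i = 1 \<and> (j = 2 \<or> j = 3)) \<or> (j = 1 \<and> (i = 2 \<or> i = 3))"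
  proof
    assume "{i,j} \<in> {{0,1},{0,2},{0,3},{1,2},{1,3}}"
    thus ?thesis using n4 by (auto simp: doubleton_eq_iff)
  next
    assume "\<exists>k. {i,j} = {0,k} \<and> 4 \<le> k \<and> k < n"
    then obtain k where "4 \<le> k" "k < n" "{i,j} = {0,k}" by (elim exE conjE)
    thus ?thesis by (auto simp: doubleton_eq_iff)
  qed
next
  assume h: "(i = 0 \<and> 1 \<le> j \<and> j < n) \<or> (j = 0 \<and> 1 \<le> i \<and> i < n)
     \<or> (i = 1 \<and> (j = 2 \<or> j = 3)) \<or> (j = 1 \<and> (i = 2 \<or> i = 3))"
  show "{i,j} \<in> theta_E n"
  proof -
    consider "i = 0 \<and> 1 \<le> j \<and> j < n" | "j = 0 \<and> 1 \<le> i \<and> i < n" | "i = 1 \<and> (j = 2 \<or> j = 3)"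
      | "j = 1 \<and> (i = 2 \<or> i = 3)" using h by blast
    thus ?thesis
    proof cases
      case 1 thus ?thesis using theta_0 by blast
    next
      case 2 thus ?thesis using theta_0[of i n] by (simp add: insert_commute)
    next
      case 3 thus ?thesis unfolding theta_E_def by blast
    next
      case 4 thus ?thesis unfolding theta_E_def by (auto simp: insert_commute)
    qed
  qed
qed

context bic begin

lemma main_ineq:
  "avm E \<ge> (4 * real n - 11) / (2 * real n - 5) \<and>
   (avm E = (4 * real n - 11) / (2 * real n - 5) \<longleftrightarrow> card A = 2 \<or> card B = 2)"
proof -
  define a where "a = card A"
  define b where "b = card B"
  define p where "p = card P"
  have a2: "a \<ge> 2" and b2: "b \<ge> 2" using cA2 cB2 a_def b_def by auto
  have s: "real a + real b = real n" using card_AB a_def b_def by (metis of_nat_add)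
  have ab4: "a * b \<ge> 4" using mult_le_mono[OF a2 b2] by simp
  have rp: "real p = real a * real b - 2" using card_P ab4 unfolding p_def a_def[symmetric] b_def[symmetric]
    by (simp add: of_nat_diff)
  have "real p - (2 * real n - 6) = real a * real b - 2 - 2 * (real a + real b) + 6" using rp s by simp
  also have "\<dots> = (real a - 2) * (real b - 2)" by (simp add: algebra_simps)
  finally have key: "real p - (2 * real n - 6) = (real a - 2) * (real b - 2)" .
  have nonneg: "(real a - 2) * (real b - 2) \<ge> 0" using a2 b2 by simp
  have zero: "(real a - 2) * (real b - 2) = 0 \<longleftrightarrow> a = 2 \<or> b = 2" by auto
  have D1: "1 + real p > 0" by simp
  have D2: "2 * real n - 5 > 0" using n5 by simp
  have av: "avm E = (1 + 2 * real p) / (1 + real p)" using avm_B p_def by simp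
  have diff: "(1 + 2 * real p) * (2 * real n - 5) - (4 * real n - 11) * (1 + real p) = real p - (2 * real n - 6)"
    by (simp add: algebra_simps)
  have le: "(4 * real n - 11) / (2 * real n - 5) \<le> (1 + 2 * real p) / (1 + real p) \<longleftrightarrow>
     (4 * real n - 11) * (1 + real p) \<le> (1 + 2 * real p) * (2 * real n - 5)"
    using D1 D2 by (simp add: divide_le_eq le_divide_eq mult.commute)
  have eq: "(1 + 2 * real p) / (1 + real p) = (4 * real n - 11) / (2 * real n - 5) \<longleftrightarrow>
     (1 + 2 * real p) * (2 * real n - 5) = (4 * real n - 11) * (1 + real p)"
    using D1 D2 by (simp add: frac_eq_eq)
  show ?thesis unfolding av le eq a_def[symmetric] b_def[symmetric]
    using diff key nonneg zero by linarith
qed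

lemma card_V2: "card (V - {u,v}) = n - 2"
  using uvV uv(1) cV finV by (simp add: card_Diff_subset)

lemma iso_imp:
  assumes iso: "graph_iso V E (theta_V n) (theta_E n)"
  shows "card A = 2 \<or> card B = 2"
proof -
  obtain p where pV: "p \<in> V" and padj: "\<forall>w\<in>V. w \<noteq> p \<longrightarrow> {p,w} \<in> E"
    using iso_facts[OF sg iso] n5 by auto
  show ?thesis
  proof (cases "p = u \<or> p = v")
    case True
    thus ?thesis
    proof
      assume pu: "p = u"
      have "V - {u,v} \<subseteq> A" using padj pu memA by auto
      hence "card A \<ge> n - 2" using card_V2 card_mono[OF finA] by metis
      thus ?thesis using card_AB cB2 by linarith
    next
      assume pv: "p = v"
      have "V - {u,v} \<subseteq> B" using padj pv memB by auto
      hence "card B \<ge> n - 2" using card_V2 card_mono[OF finB] by metis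
      thus ?thesis using card_AB cA2 by linarith
    qed
  next
    case False
    have "\<not> V \<subseteq> {u,v,p}"
    proof
      assume "V \<subseteq> {u,v,p}"
      hence "card V \<le> card {u,v,p}" by (intro card_mono) auto
      also have "\<dots> \<le> 3" by (simp add: card_insert_if)
      finally show False using cV n5 by simp
    qed
    then obtain w where w: "w \<in> V" "w \<notin> {u,v,p}" by blast
    hence "{p,w} \<in> E" using padj by auto
    thus ?thesis using uv(3)[of "{p,w}"] w False by auto
  qed
qed

lemma B2_iso:
  assumes B2: "card B = 2"
  shows "graph_iso V E (theta_V n) (theta_E n)"
proof -
  have "A \<inter> B = B" using card_int B2 finB by (metis Int_lower2 card_subset_eq)
  hence BA: "B \<subseteq> A" by blast
  hence Aeq: "A = V - {u,v}" using AB_un by blast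
  obtain x y where xy: "B = {x,y}" "x \<noteq> y" using B2 unfolding card_2_iff by meson
  have xyV: "x \<in> V" "y \<in> V" "x \<noteq> u" "x \<noteq> v" "y \<noteq> u" "y \<noteq> v" using B_sub xy by auto
  define R where "R = V - {u,v,x,y}"
  have cR: "card R = n - 4"
  proof -
    have "{u,v,x,y} \<subseteq> V" using xyV uvV by auto
    moreover have "card {u,v,x,y} = 4" using xyV uv(1) xy(2) by auto
    ultimately show ?thesis unfolding R_def using card_Diff_subset[of "{u,v,x,y}" V] finV cV by simp
  qed
  obtain h where h: "bij_betw h R {4..<n}"
    using finite_same_card_bij[of R "{4..<n}"] cR finV unfolding R_def by auto
  have hR: "\<And>w. w \<in> R \<Longrightarrow> 4 \<le> h w \<and> h w < n" using h unfolding bij_betw_def by auto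
  define f where "f w = (if w = u then 0 else if w = v then 1 else if w = x then 2 else if w = y then 3 else h w)" for w
  have fR: "\<And>w. w \<in> R \<Longrightarrow> f w = h w" unfolding f_def R_def by auto
  have fcases: "\<And>w. w \<in> V \<Longrightarrow> (w = u \<and> f w = 0) \<or> (w = v \<and> f w = 1) \<or> (w = x \<and> f w = 2)
     \<or> (w = y \<and> f w = 3) \<or> (w \<in> R \<and> f w = h w \<and> 4 \<le> f w \<and> f w < n)"
  proof -
    fix w assume w: "w \<in> V"
    show "?thesis w" unfolding f_def using hR[of w] w by (auto simp: R_def)
  qed
  have Rn: "u \<notin> R" "v \<notin> R" "x \<notin> R" "y \<notin> R" unfolding R_def by auto
  have f0: "\<And>w. w \<in> V \<Longrightarrow> f w = 0 \<longleftrightarrow> w = u"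
  proof - fix w assume w: "w \<in> V" show "?thesis w" using fcases[OF w] uv(1) xyV xy(2) Rn by auto qed
  have f1: "\<And>w. w \<in> V \<Longrightarrow> f w = 1 \<longleftrightarrow> w = v"
  proof - fix w assume w: "w \<in> V" show "?thesis w" using fcases[OF w] uv(1) xyV xy(2) Rn by auto qed
  have f23: "\<And>w. w \<in> V \<Longrightarrow> (f w = 2 \<or> f w = 3) \<longleftrightarrow> (w = x \<or> w = y)"
  proof - fix w assume w: "w \<in> V" show "?thesis w" using fcases[OF w] uv(1) xyV xy(2) Rn by auto qed
  have fn: "\<And>w. w \<in> V \<Longrightarrow> f w < n"
  proof - fix w assume w: "w \<in> V" show "?thesis w" using fcases[OF w] n5 by auto qed
  have inj: "inj_on f V"
  proof
    fix a c assume a: "a \<in> V" and c: "c \<in> V" and eq: "f a = f c"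
    have hinj: "\<And>a c. a \<in> R \<Longrightarrow> c \<in> R \<Longrightarrow> h a = h c \<Longrightarrow> a = c"
      using h unfolding bij_betw_def inj_on_def by blast
    show "a = c" using fcases[OF a] fcases[OF c] eq hinj by auto
  qed
  have img: "f ` V = {0..<n}"
  proof
    show "f ` V \<subseteq> {0..<n}" using fn by auto
    show "{0..<n} \<subseteq> f ` V"
    proof
      fix k assume k: "k \<in> {0..<n}"
      show "k \<in> f ` V"
      proof (cases "k \<ge> 4")
        case True
        hence "k \<in> h ` R" using h k unfolding bij_betw_def by auto
        then obtain w where "w \<in> R" "k = h w" by auto
        thus ?thesis using fR unfolding R_def by (metis DiffD1 image_eqI R_def)
      next
        case False
        hence "k = 0 \<or> k = 1 \<or> k = 2 \<or> k = 3" by auto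
        moreover have "f u = 0" "f v = 1" "f x = 2" "f y = 3" unfolding f_def using xyV uv(1) xy(2) by auto
        ultimately show ?thesis using uvV xyV by (metis image_eqI)
      qed
    qed
  qed
  have Echar: "\<And>a c. a \<in> V \<Longrightarrow> c \<in> V \<Longrightarrow> {a,c} \<in> E \<longleftrightarrow>
      (a = u \<and> c \<noteq> u) \<or> (c = u \<and> a \<noteq> u) \<or> (a = v \<and> (c = x \<or> c = y)) \<or> (c = v \<and> (a = x \<or> a = y))"
  proof -
    fix a c assume a: "a \<in> V" and c: "c \<in> V"
    have "{a,c} \<in> E \<longleftrightarrow> {a,c} \<in> insert {u,v} ((\<lambda>w. {u,w}) ` A \<union> (\<lambda>w. {v,w}) ` B)"
      using E_eq by simp
    also have "\<dots> \<longleftrightarrow> {a,c} = {u,v} \<or> (\<exists>w\<in>A. {a,c} = {u,w}) \<or> (\<exists>w\<in>B. {a,c} = {v,w})"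
      by (simp only: insert_iff Un_iff image_iff)
    also have "\<dots> \<longleftrightarrow> (a = u \<and> c \<noteq> u) \<or> (c = u \<and> a \<noteq> u) \<or> (a = v \<and> (c = x \<or> c = y)) \<or> (c = v \<and> (a = x \<or> a = y))"
      unfolding Aeq xy using a c xyV uv(1) by (auto simp: doubleton_eq_iff)
    finally show "?thesis a c" .
  qed
  have edges: "\<forall>a\<in>V. \<forall>c\<in>V. {a, c} \<in> E \<longleftrightarrow> {f a, f c} \<in> theta_E n"
  proof (intro ballI)
    fix a c assume a: "a \<in> V" and c: "c \<in> V"
    have "{f a, f c} \<in> theta_E n \<longleftrightarrow> (f a = 0 \<and> 1 \<le> f c \<and> f c < n) \<or> (f c = 0 \<and> 1 \<le> f a \<and> f a < n)
     \<or> (f a = 1 \<and> (f c = 2 \<or> f c = 3)) \<or> (f c = 1 \<and> (f a = 2 \<or> f a = 3))"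
      using theta_char n5 by simp
    also have "\<dots> \<longleftrightarrow> (a = u \<and> c \<noteq> u) \<or> (c = u \<and> a \<noteq> u) \<or> (a = v \<and> (c = x \<or> c = y)) \<or> (c = v \<and> (a = x \<or> a = y))"
      using f0[OF a] f0[OF c] f1[OF a] f1[OF c] f23[OF a] f23[OF c] fn[OF a] fn[OF c]
      by (auto simp: Suc_le_eq)
    finally show "{a, c} \<in> E \<longleftrightarrow> {f a, f c} \<in> theta_E n" using Echar[OF a c] by simp
  qed
  show ?thesis unfolding graph_iso_def theta_V_def
    using inj img edges unfolding bij_betw_def by blast
qed

interpretation sw: bic V E n v u
  by unfold_locales (use sg cn cV n5 cE de in \<open>auto simp: dom_edge_def insert_commute\<close>)

lemma A2_iso: "card A = 2 \<Longrightarrow> graph_iso V E (theta_V n) (theta_E n)"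
  using sw.B2_iso swB by simp

lemma main_B:
  "avm E \<ge> (4 * real n - 11) / (2 * real n - 5) \<and>
   (avm E = (4 * real n - 11) / (2 * real n - 5) \<longleftrightarrow> graph_iso V E (theta_V n) (theta_E n))"
  using main_ineq iso_imp A2_iso B2_iso by blast

end



theorem theorem1p2:
  fixes V :: "'a set" and E :: "'a set set" and n :: nat
  assumes "simple_graph V E" and "connected_graph V E"
    and "card V = n" and "n \<ge> 5" and "card E = n + 1"
  shows "avm E \<ge> (4 * real n - 11) / (2 * real n - 5) \<and>
    (avm E = (4 * real n - 11) / (2 * real n - 5) \<longleftrightarrow> graph_iso V E (theta_V n) (theta_E n))"
proof (cases "\<exists>u v. dom_edge E u v")
  case True
  then obtain u v where "dom_edge E u v" by blast
  then interpret bic V E n u v using assms by unfold_locales auto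
  show ?thesis by (rule main_B)
next
  case False
  have ne: "E \<noteq> {}" using assms(5) by auto
  have a2: "avm E \<ge> 2" by (rule avm_ge2[OF assms(1) ne False])
  have D: "2 * real n - 5 > 0" using assms(4) by simp
  have lt: "(4 * real n - 11) / (2 * real n - 5) < 2" using D by (simp add: divide_less_eq)
  have niso: "\<not> graph_iso V E (theta_V n) (theta_E n)"
  proof
    assume iso: "graph_iso V E (theta_V n) (theta_E n)"
    have "n \<ge> 2" using assms(4) by simp
    from iso_facts[OF assms(1) iso this] obtain p q where "p \<noteq> q" "{p,q} \<in> E" "\<forall>e\<in>E. p \<in> e \<or> q \<in> e"
      by blast
    hence "dom_edge E p q" unfolding dom_edge_def by blast
    thus False using False by blast
  qed
  show ?thesis using a2 lt niso by auto
qed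

end
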